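(* For every $\ell>0$ let $\mathscr D_\ell=\{(r,v)\in(0,\infty)\times\mathbb R: v^2-\frac mr+\frac{\ell}{r^2}>0\}$. Define $(R(\cdot,\cdot,\ell),V(\cdot,\cdot,\ell)):\mathbb R\times(0,\infty)\to\mathscr D_\ell$ by $$R(\theta,a,\ell)=p\,H_\kappa\Big(\frac{|\theta|}{p}\Big)-p\kappa,\qquad V(\theta,a,\ell)=\operatorname{sgn}(\theta)\,a\sqrt{1+\frac{m}{a^2R(\theta,a,\ell)}-\frac{\ell}{a^2R(\theta,a,\ell)^2}},$$ with $p=p(a,\ell)$, $\kappa=\kappa(a,\ell)$. Then this map is a canonical (symplectic) diffeomorphism, with inverse $(\Theta,\mathcal A):\mathscr D_\ell\to\mathbb R\times(0,\infty)$, $$\mathcal A(r,v,\ell)=\sqrt{v^2-\frac mr+\frac{\ell}{r^2}},\qquad\Theta(r,v,\ell)=\operatorname{sgn}(v)\,p(a,\ell)\,G_{\kappa(a,\ell)}\Big(\frac{r}{p(a,\ell)}+\kappa(a,\ell)\Big)\Big|_{a=\mathcal A(r,v,\ell)}.$$ Moreover, the solutions of $\dot r=v$, $\dot v=\frac{\ell}{r^3}-\frac m2\frac1{r^2}$ with $v^2-\frac mr+\frac{\ell}{r^2}>0$ are exactly the curves $t\mapsto(R(\theta+ta,a,\ell),V(\theta+ta,a,\ell))$ with parameters $(\theta,a)\in\mathbb R\times(0,\infty)$.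
   Context: Fix $m>0$. For $a,\ell>0$: $\kappa(a,\ell)=(1+4a^2\ell/m^2)^{-1/2}\in(0,1)$, $p(a,\ell)=\frac{m}{2a^2\kappa(a,\ell)}$. For $\kappa\in(0,1)$, $G_\kappa:[1,\infty)\to[0,\infty)$, $G_\kappa(x)=\sqrt{x^2-1}-\kappa\ln(x+\sqrt{x^2-1})$, and $H_\kappa=G_\kappa^{-1}:[0,\infty)\to[1,\infty)$. Canonical means that the map preserves the symplectic form, $dr\wedge dv=d\theta\wedge da$ (equivalently, Poisson brackets $\partial_rf\partial_vg-\partial_vf\partial_rg$ correspond to $\partial_\theta f\partial_ag-\partial_af\partial_\theta g$). *)

theory Defs
  imports "HOL-Analysis.Analysis"
begin

definition kappa :: "real \<Rightarrow> real \<Rightarrow> real \<Rightarrow> real" where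
  "kappa m a l = 1 / sqrt (1 + 4 * a^2 * l / m^2)"

definition pp :: "real \<Rightarrow> real \<Rightarrow> real \<Rightarrow> real" where
  "pp m a l = m / (2 * a^2 * kappa m a l)"

definition G :: "real \<Rightarrow> real \<Rightarrow> real" where
  "G k x = sqrt (x^2 - 1) - k * ln (x + sqrt (x^2 - 1))"

definition H :: "real \<Rightarrow> real \<Rightarrow> real" where
  "H k = the_inv_into {1..} (G k)"

definition Rf :: "real \<Rightarrow> real \<Rightarrow> real \<Rightarrow> real \<Rightarrow> real" where
  "Rf m l \<theta> a = pp m a l * H (kappa m a l) (\<bar>\<theta>\<bar> / pp m a l) - pp m a l * kappa m a l"

definition Vf :: "real \<Rightarrow> real \<Rightarrow> real \<Rightarrow> real \<Rightarrow> real" where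
  "Vf m l \<theta> a = sgn \<theta> * a * sqrt (1 + m / (a^2 * Rf m l \<theta> a) - l / (a^2 * (Rf m l \<theta> a)^2))"

definition Dl :: "real \<Rightarrow> real \<Rightarrow> (real \<times> real) set" where
  "Dl m l = {(r, v). r > 0 \<and> v^2 - m / r + l / r^2 > 0}"

definition Af :: "real \<Rightarrow> real \<Rightarrow> real \<Rightarrow> real \<Rightarrow> real" where
  "Af m l r v = sqrt (v^2 - m / r + l / r^2)"

definition Theta :: "real \<Rightarrow> real \<Rightarrow> real \<Rightarrow> real \<Rightarrow> real" where
  "Theta m l r v = (let a = Af m l r v in
     sgn v * pp m a l * G (kappa m a l) (r / pp m a l + kappa m a l))"

definition canon_map :: "real \<Rightarrow> real \<Rightarrow> real \<times> real \<Rightarrow> real \<times> real" where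
  "canon_map m l = (\<lambda>(\<theta>, a). (Rf m l \<theta> a, Vf m l \<theta> a))"

definition canon_inv :: "real \<Rightarrow> real \<Rightarrow> real \<times> real \<Rightarrow> real \<times> real" where
  "canon_inv m l = (\<lambda>(r, v). (Theta m l r v, Af m l r v))"

text \<open>C-infinity on an (open) set: there is a family D k hs x of iterated
  directional derivatives (D k hs x = k-th Frechet derivative at x applied to hs),
  with D 0 [] = f on S and each D k hs Frechet differentiable at every point of S
  with derivative h |-> D (k+1) (h # hs).\<close>
definition Cinf_on :: "'a::real_normed_vector set \<Rightarrow> ('a \<Rightarrow> 'b::real_normed_vector) \<Rightarrow> bool" where
  "Cinf_on S f \<longleftrightarrow> (\<exists>D :: nat \<Rightarrow> 'a list \<Rightarrow> 'a \<Rightarrow> 'b.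
      (\<forall>x\<in>S. D 0 [] x = f x) \<and>
      (\<forall>k hs x. length hs = k \<and> x \<in> S \<longrightarrow>
          (D k hs has_derivative (\<lambda>h. D (Suc k) (h # hs) x)) (at x)))"

end

theory Submission
  imports Defs
begin


fun Ck :: "nat \<Rightarrow> 'a::real_normed_vector set \<Rightarrow> ('a \<Rightarrow> real) \<Rightarrow> bool" where
  "Ck 0 S f = True"
| "Ck (Suc k) S f = (\<exists>f'. (\<forall>x\<in>S. (f has_derivative f' x) (at x)) \<and> (\<forall>h. Ck k S (\<lambda>x. f' x h)))"

lemma CkI: "(\<And>x. x \<in> S \<Longrightarrow> (f has_derivative f' x) (at x)) \<Longrightarrow> (\<And>h. Ck k S (\<lambda>x. f' x h)) \<Longrightarrow> Ck (Suc k) S f"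
  by auto

lemma Ck_mono: "Ck (Suc k) S f \<Longrightarrow> Ck k S f"
proof (induction k arbitrary: f)
  case 0 then show ?case by simp
next
  case (Suc k)
  then obtain f' where "\<forall>x\<in>S. (f has_derivative f' x) (at x)" "\<forall>h. Ck (Suc k) S (\<lambda>x. f' x h)" by auto
  then show ?case using Suc.IH by auto
qed

lemma Ck_cong: "open S \<Longrightarrow> (\<And>x. x \<in> S \<Longrightarrow> f x = g x) \<Longrightarrow> Ck k S f \<Longrightarrow> Ck k S g"
proof (induction k arbitrary: f g)
  case 0 then show ?case by simp
next
  case (Suc k)
  then obtain f' where d: "\<forall>x\<in>S. (f has_derivative f' x) (at x)" "\<forall>h. Ck k S (\<lambda>x. f' x h)" by auto
  have "\<forall>x\<in>S. (g has_derivative f' x) (at x)"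
    using d(1) has_derivative_transform_within_open[OF _ Suc.prems(1)] Suc.prems(2) by metis
  then show ?case using d(2) by auto
qed

lemma Ck_const: "Ck k S (\<lambda>x. c)"
proof (induction k arbitrary: c)
  case (Suc k)
  show ?case by (rule CkI[of _ _ "\<lambda>x h. 0"]) (simp_all add: Suc.IH)
qed simp

lemma Ck_linear: "bounded_linear f \<Longrightarrow> Ck k S f"
proof (cases k)
  case (Suc j)
  assume "bounded_linear f"
  then show ?thesis unfolding Suc
    by (intro CkI[of _ _ "\<lambda>x. f"]) (simp_all add: bounded_linear_imp_has_derivative Ck_const)
qed simp

lemma Ck_add: "Ck k S f \<Longrightarrow> Ck k S g \<Longrightarrow> Ck k S (\<lambda>x. f x + g x)"
proof (induction k arbitrary: f g)
  case (Suc k)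
  then obtain f' g' where d: "\<forall>x\<in>S. (f has_derivative f' x) (at x)" "\<forall>h. Ck k S (\<lambda>x. f' x h)"
     "\<forall>x\<in>S. (g has_derivative g' x) (at x)" "\<forall>h. Ck k S (\<lambda>x. g' x h)" by auto
  show ?case
  proof (rule CkI[of _ _ "\<lambda>x h. f' x h + g' x h"])
    show "((\<lambda>x. f x + g x) has_derivative (\<lambda>h. f' x h + g' x h)) (at x)" if "x \<in> S" for x
      using d that by (auto intro: has_derivative_add)
    show "Ck k S (\<lambda>x. f' x h + g' x h)" for h using d(2,4) Suc.IH by blast
  qed
qed simp

lemma Ck_scale: "Ck k S f \<Longrightarrow> Ck k S (\<lambda>x. c * f x)"
proof (induction k arbitrary: f)
  case (Suc k)
  then obtain f' where d: "\<forall>x\<in>S. (f has_derivative f' x) (at x)" "\<forall>h. Ck k S (\<lambda>x. f' x h)" by auto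
  show ?case
  proof (rule CkI[of _ _ "\<lambda>x h. c * f' x h"])
    show "((\<lambda>x. c * f x) has_derivative (\<lambda>h. c * f' x h)) (at x)" if "x \<in> S" for x
      using d that by (auto intro: has_derivative_mult_right)
    show "Ck k S (\<lambda>x. c * f' x h)" for h using d(2) Suc.IH by blast
  qed
qed simp

lemma Ck_neg: "Ck k S f \<Longrightarrow> Ck k S (\<lambda>x. - f x)"
proof -
  assume "Ck k S f"
  from Ck_scale[OF this, of "-1"] show ?thesis by simp
qed

lemma Ck_diff: "Ck k S f \<Longrightarrow> Ck k S g \<Longrightarrow> Ck k S (\<lambda>x. f x - g x)"
proof -
  assume "Ck k S f" "Ck k S g"
  from Ck_add[OF this(1) Ck_neg[OF this(2)]] show ?thesis by simp
qed

lemma Ck_mult: "Ck k S f \<Longrightarrow> Ck k S g \<Longrightarrow> Ck k S (\<lambda>x. f x * g x)"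
proof (induction k arbitrary: f g)
  case (Suc k)
  then obtain f' g' where d: "\<forall>x\<in>S. (f has_derivative f' x) (at x)" "\<forall>h. Ck k S (\<lambda>x. f' x h)"
     "\<forall>x\<in>S. (g has_derivative g' x) (at x)" "\<forall>h. Ck k S (\<lambda>x. g' x h)" by auto
  have fg: "Ck k S f" "Ck k S g" using Suc.prems Ck_mono by blast+
  show ?case
  proof (rule CkI[of _ _ "\<lambda>x h. f x * g' x h + f' x h * g x"])
    show "((\<lambda>x. f x * g x) has_derivative (\<lambda>h. f x * g' x h + f' x h * g x)) (at x)" if "x \<in> S" for x
      using d that by (auto intro: has_derivative_mult)
    show "Ck k S (\<lambda>x. f x * g' x h + f' x h * g x)" for h
      using Ck_add[OF Suc.IH[OF fg(1) d(4)[rule_format]] Suc.IH[OF d(2)[rule_format] fg(2)]] .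
  qed
qed simp

lemma Ck_comp1:
  fixes g :: "real \<Rightarrow> real"
  assumes "Ck k T g" "Ck k S f" "\<And>x. x \<in> S \<Longrightarrow> f x \<in> T"
  shows "Ck k S (\<lambda>x. g (f x))"
  using assms
proof (induction k arbitrary: f g)
  case (Suc k)
  then obtain f' g' where d: "\<forall>x\<in>S. (f has_derivative f' x) (at x)" "\<forall>h. Ck k S (\<lambda>x. f' x h)"
     "\<forall>x\<in>T. (g has_derivative g' x) (at x)" "\<forall>h. Ck k T (\<lambda>x. g' x h)" by auto
  have lin: "g' y h = h * g' y 1" if "y \<in> T" for y h
  proof -
    have "linear (g' y)" using d(3) that has_derivative_linear by blast
    then show ?thesis using linear_scale[of "g' y" h 1] by simp
  qed
  have fk: "Ck k S f" using Suc.prems Ck_mono by blast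
  show ?case
  proof (rule CkI[of _ _ "\<lambda>x h. f' x h * g' (f x) 1"])
    fix x assume x: "x \<in> S"
    have fd: "(f has_derivative f' x) (at x)" using d(1) x by blast
    have gd: "(g has_derivative g' (f x)) (at (f x))" using d(3) Suc.prems(3)[OF x] by blast
    have "((\<lambda>x. g (f x)) has_derivative (\<lambda>h. g' (f x) (f' x h))) (at x)"
      using has_derivative_compose[OF fd gd] by (simp add: o_def)
    moreover have "(\<lambda>h. g' (f x) (f' x h)) = (\<lambda>h. f' x h * g' (f x) 1)"
      by (rule ext) (rule lin[OF Suc.prems(3)[OF x]])
    ultimately show "((\<lambda>x. g (f x)) has_derivative (\<lambda>h. f' x h * g' (f x) 1)) (at x)"
      by simp
  next
    fix h
    have "Ck k S (\<lambda>x. g' (f x) 1)" using Suc.IH[of "\<lambda>y. g' y 1" f, OF d(4)[rule_format] fk Suc.prems(3)] .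
    then show "Ck k S (\<lambda>x. f' x h * g' (f x) 1)" using Ck_mult[OF d(2)[rule_format]] by blast
  qed
qed simp

lemma Ck_comp2:
  fixes g :: "real \<times> real \<Rightarrow> real"
  assumes "Ck k T g" "Ck k S f1" "Ck k S f2" "\<And>x. x \<in> S \<Longrightarrow> (f1 x, f2 x) \<in> T"
  shows "Ck k S (\<lambda>x. g (f1 x, f2 x))"
  using assms
proof (induction k arbitrary: f1 f2 g)
  case (Suc k)
  then obtain f1' f2' g' where d: "\<forall>x\<in>S. (f1 has_derivative f1' x) (at x)" "\<forall>h. Ck k S (\<lambda>x. f1' x h)"
     "\<forall>x\<in>S. (f2 has_derivative f2' x) (at x)" "\<forall>h. Ck k S (\<lambda>x. f2' x h)"
     "\<forall>x\<in>T. (g has_derivative g' x) (at x)" "\<forall>h. Ck k T (\<lambda>x. g' x h)" by auto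
  have lin: "g' y (h1, h2) = h1 * g' y (1,0) + h2 * g' y (0,1)" if "y \<in> T" for y h1 h2
  proof -
    have "linear (g' y)" using d(5) that has_derivative_linear by blast
    then show ?thesis
      using linear_add[OF \<open>linear (g' y)\<close>, of "(h1,0)" "(0,h2)"] linear_scale[OF \<open>linear (g' y)\<close>, of h1 "(1,0)"]
        linear_scale[OF \<open>linear (g' y)\<close>, of h2 "(0,1)"] by simp
  qed
  have fk: "Ck k S f1" "Ck k S f2" using Suc.prems Ck_mono by blast+
  show ?case
  proof (rule CkI[of _ _ "\<lambda>x h. f1' x h * g' (f1 x, f2 x) (1,0) + f2' x h * g' (f1 x, f2 x) (0,1)"])
    fix x assume x: "x \<in> S"
    have pd: "((\<lambda>x. (f1 x, f2 x)) has_derivative (\<lambda>h. (f1' x h, f2' x h))) (at x)"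
      using d x by (auto intro: has_derivative_Pair)
    have "((\<lambda>x. g (f1 x, f2 x)) has_derivative (\<lambda>h. g' (f1 x, f2 x) (f1' x h, f2' x h))) (at x)"
      using has_derivative_compose[OF pd d(5)[rule_format, OF Suc.prems(4)[OF x]]] by (simp add: o_def)
    then show "((\<lambda>x. g (f1 x, f2 x)) has_derivative (\<lambda>h. f1' x h * g' (f1 x, f2 x) (1,0) + f2' x h * g' (f1 x, f2 x) (0,1))) (at x)"
      by (subst (asm) lin[OF Suc.prems(4)[OF x]])
  next
    fix h
    have a: "Ck k S (\<lambda>x. g' (f1 x, f2 x) (1,0))" using Suc.IH[of "\<lambda>y. g' y (1,0)" f1 f2, OF d(6)[rule_format] fk Suc.prems(4)] .
    have b: "Ck k S (\<lambda>x. g' (f1 x, f2 x) (0,1))" using Suc.IH[of "\<lambda>y. g' y (0,1)" f1 f2, OF d(6)[rule_format] fk Suc.prems(4)] .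
    show "Ck k S (\<lambda>x. f1' x h * g' (f1 x, f2 x) (1,0) + f2' x h * g' (f1 x, f2 x) (0,1))"
      using Ck_add[OF Ck_mult[OF d(2)[rule_format] a] Ck_mult[OF d(4)[rule_format] b]] .
  qed
qed simp

definition smooth :: "'a::real_normed_vector set \<Rightarrow> ('a \<Rightarrow> real) \<Rightarrow> bool" where
  "smooth S f \<longleftrightarrow> (\<forall>k. Ck k S f)"

lemma Ck_Suc_real:
  assumes "\<And>x. x \<in> T \<Longrightarrow> (g has_real_derivative g1 x) (at x)" "Ck k T g1"
  shows "Ck (Suc k) T g"
proof (rule CkI[of _ _ "\<lambda>x h. g1 x * h"])
  show "(g has_derivative (\<lambda>h. g1 x * h)) (at x)" if "x \<in> T" for x
    using assms(1)[OF that] by (simp add: has_field_derivative_def)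
  show "Ck k T (\<lambda>x. g1 x * h)" for h using Ck_mult[OF assms(2) Ck_const] .
qed

lemma Ck_id: "Ck k S (\<lambda>x::real. x)"
  by (rule Ck_linear) (rule bounded_linear_ident)

lemma Ck_inverse: "Ck k {x::real. x \<noteq> 0} inverse"
proof (induction k)
  case (Suc k)
  show ?case
  proof (rule Ck_Suc_real[of _ _ "\<lambda>x. - (inverse x * inverse x)"])
    show "(inverse has_real_derivative - (inverse x * inverse x)) (at x)" if "x \<in> {x. x \<noteq> 0}" for x
      using DERIV_inverse[of x UNIV] that by (simp add: power2_eq_square)
    show "Ck k {x. x \<noteq> 0} (\<lambda>x. - (inverse x * inverse x))"
      using Ck_neg[OF Ck_mult[OF Suc.IH Suc.IH]] .
  qed
qed simp

lemma Ck_inverse_comp: "Ck k S f \<Longrightarrow> (\<And>x. x \<in> S \<Longrightarrow> f x \<noteq> 0) \<Longrightarrow> Ck k S (\<lambda>x. inverse (f x))"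
  using Ck_comp1[OF Ck_inverse, of k S f] by auto

lemma Ck_divide: "Ck k S f \<Longrightarrow> Ck k S g \<Longrightarrow> (\<And>x. x \<in> S \<Longrightarrow> g x \<noteq> 0) \<Longrightarrow> Ck k S (\<lambda>x. f x / g x)"
  using Ck_mult[OF _ Ck_inverse_comp, of k S f g] by (simp add: divide_inverse)

lemma Ck_sqrt: "Ck k {x::real. 0 < x} sqrt"
proof (induction k)
  case (Suc k)
  show ?case
  proof (rule Ck_Suc_real[of _ _ "\<lambda>x. inverse (sqrt x) / 2"])
    show "(sqrt has_real_derivative inverse (sqrt x) / 2) (at x)" if "x \<in> {x. 0 < x}" for x
      using DERIV_real_sqrt[of x] that by simp
    show "Ck k {x. 0 < x} (\<lambda>x. inverse (sqrt x) / 2)"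
      using Ck_divide[OF Ck_inverse_comp[OF Suc.IH] Ck_const, of 2] by simp
  qed
qed simp

lemma Ck_sqrt_comp: "Ck k S f \<Longrightarrow> (\<And>x. x \<in> S \<Longrightarrow> 0 < f x) \<Longrightarrow> Ck k S (\<lambda>x. sqrt (f x))"
  using Ck_comp1[OF Ck_sqrt, of k S f] by auto

lemma Ck_ln: "Ck k {x::real. 0 < x} ln"
proof (cases k)
  case (Suc j)
  show ?thesis unfolding Suc
  proof (rule Ck_Suc_real[of _ _ "\<lambda>x. inverse x"])
    show "(ln has_real_derivative inverse x) (at x)" if "x \<in> {x. 0 < x}" for x
      using DERIV_ln[of x] that by simp
    show "Ck j {x. 0 < x} (\<lambda>x. inverse x)"
      by (rule Ck_inverse_comp[OF Ck_id]) simp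
  qed
qed simp

lemma Ck_arsinh: "Ck k UNIV (arsinh :: real \<Rightarrow> real)"
proof (cases k)
  case (Suc j)
  show ?thesis unfolding Suc
  proof (rule Ck_Suc_real[of _ _ "\<lambda>x. 1 / sqrt (x^2 + 1)"])
    show "(arsinh has_real_derivative 1 / sqrt (x^2 + 1)) (at x)" for x :: real
      by (rule arsinh_real_has_field_derivative)
    have "Ck j UNIV (\<lambda>x::real. x * x + 1)" using Ck_add[OF Ck_mult[OF Ck_id Ck_id] Ck_const] .
    then have "Ck j UNIV (\<lambda>x::real. sqrt (x * x + 1))"
      by (rule Ck_sqrt_comp) (simp add: add_nonneg_pos)
    then have "Ck j UNIV (\<lambda>x::real. 1 / sqrt (x * x + 1))"
      by (rule Ck_divide[OF Ck_const]) (smt (verit) real_sqrt_gt_zero zero_le_square)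
    then show "Ck j UNIV (\<lambda>x::real. 1 / sqrt (x^2 + 1))" by (simp add: power2_eq_square)
  qed
qed simp

lemma smooth_deriv:
  assumes "open S" "smooth S f"
  shows "\<exists>f'. (\<forall>x\<in>S. (f has_derivative f' x) (at x)) \<and> (\<forall>h. smooth S (\<lambda>x. f' x h))"
proof -
  have "Ck (Suc 0) S f" using assms(2) unfolding smooth_def by blast
  then obtain f1 where f1: "\<forall>x\<in>S. (f has_derivative f1 x) (at x)" by auto
  have "Ck k S (\<lambda>x. f1 x h)" for k h
  proof -
    have "Ck (Suc k) S f" using assms(2) unfolding smooth_def by blast
    then obtain fk where fk: "\<forall>x\<in>S. (f has_derivative fk x) (at x)" "\<forall>h. Ck k S (\<lambda>x. fk x h)" by auto
    have e: "fk x h = f1 x h" if x: "x \<in> S" for x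
      using has_derivative_unique[OF fk(1)[rule_format, OF x] f1[rule_format, OF x]] by simp
    show ?thesis using Ck_cong[OF assms(1) e fk(2)[rule_format, of h]] by simp
  qed
  then show ?thesis using f1 unfolding smooth_def by blast
qed

definition dch :: "'a::real_normed_vector set \<Rightarrow> ('a \<Rightarrow> real) \<Rightarrow> 'a \<Rightarrow> 'a \<Rightarrow> real" where
  "dch S f = (SOME f'. (\<forall>x\<in>S. (f has_derivative f' x) (at x)) \<and> (\<forall>h. smooth S (\<lambda>x. f' x h)))"

lemma dch_prop:
  assumes "open S" "smooth S f"
  shows "(\<forall>x\<in>S. (f has_derivative dch S f x) (at x)) \<and> (\<forall>h. smooth S (\<lambda>x. dch S f x h))"
  unfolding dch_def by (rule someI_ex[OF smooth_deriv[OF assms]])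

fun Dr :: "'a::real_normed_vector set \<Rightarrow> ('a \<Rightarrow> real) \<Rightarrow> 'a list \<Rightarrow> 'a \<Rightarrow> real" where
  "Dr S f [] = f"
| "Dr S f (h # hs) = (\<lambda>x. dch S (Dr S f hs) x h)"

lemma Dr_smooth:
  assumes "open S" "smooth S f"
  shows "smooth S (Dr S f hs)"
proof (induction hs)
  case Nil then show ?case using assms(2) by simp
next
  case (Cons h hs)
  then show ?case using dch_prop[OF assms(1) Cons] by simp
qed

lemma Dr_deriv:
  assumes "open S" "smooth S f" "x \<in> S"
  shows "(Dr S f hs has_derivative (\<lambda>h. Dr S f (h # hs) x)) (at x)"
  using dch_prop[OF assms(1) Dr_smooth[OF assms(1,2), of hs]] assms(3) by simp

lemma smooth_Cinf_pair:
  fixes F :: "'a::real_normed_vector \<Rightarrow> real \<times> real"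
  assumes "open S" "smooth S f1" "smooth S f2" "\<And>x. x \<in> S \<Longrightarrow> F x = (f1 x, f2 x)"
  shows "Cinf_on S F"
  unfolding Cinf_on_def
proof (intro exI[of _ "\<lambda>k hs x. (Dr S f1 hs x, Dr S f2 hs x)"] conjI allI impI ballI)
  show "(Dr S f1 [] x, Dr S f2 [] x) = F x" if "x \<in> S" for x using assms(4)[OF that] by simp
  fix k :: nat and hs :: "'a list" and x :: 'a assume "length hs = k \<and> x \<in> S"
  then have x: "x \<in> S" by blast
  show "((\<lambda>x. (Dr S f1 hs x, Dr S f2 hs x)) has_derivative (\<lambda>h. (Dr S f1 (h # hs) x, Dr S f2 (h # hs) x))) (at x)"
    by (rule has_derivative_Pair[OF Dr_deriv[OF assms(1,2) x] Dr_deriv[OF assms(1,3) x]])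
qed




definition psi :: "real \<Rightarrow> real \<Rightarrow> real" where
  "psi k w = w - k * arsinh w"

lemma psi_deriv: "(psi k has_real_derivative (1 - k / sqrt (w^2 + 1))) (at w)"
  unfolding psi_def by (auto intro!: derivative_eq_intros)

lemma sqrt_ge1: "1 \<le> sqrt (w^2 + 1)"
  by simp

lemma psi_deriv_pos: "k < 1 \<Longrightarrow> 0 < 1 - k / sqrt (w^2 + 1)"
proof -
  assume k: "k < 1"
  have s: "1 \<le> sqrt (w^2 + 1)" by simp
  have "k < sqrt (w^2 + 1)" using k s by linarith
  then have "k / sqrt (w^2 + 1) < 1"
    using s divide_less_eq_1_pos[of "sqrt (w^2 + 1)" k] by linarith
  then show ?thesis by simp
qed

lemma psi_strict_mono: "k < 1 \<Longrightarrow> strict_mono (psi k)"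
  unfolding strict_mono_def
proof (intro allI impI)
  fix x y :: real assume "k < 1" "x < y"
  then show "psi k x < psi k y"
    using DERIV_pos_imp_increasing[of x y "psi k"] psi_deriv psi_deriv_pos by blast
qed

lemma psi_odd: "psi k (-w) = - psi k w"
  unfolding psi_def by simp

lemma psi_0 [simp]: "psi k 0 = 0"
  unfolding psi_def by simp

lemma arsinh_le: "0 \<le> w \<Longrightarrow> arsinh w \<le> (w::real)"
proof -
  assume w: "0 \<le> w"
  have "psi 1 0 \<le> psi 1 w"
  proof (rule DERIV_nonneg_imp_increasing_open[OF w])
    show "\<exists>y. (psi 1 has_real_derivative y) (at x) \<and> 0 \<le> y" for x
    proof (intro exI conjI)
      show "(psi 1 has_real_derivative 1 - 1 / sqrt (x^2 + 1)) (at x)" by (rule psi_deriv)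
      have "1 \<le> sqrt (x^2 + 1)" by simp
      then have "1 / sqrt (x^2 + 1) \<le> 1" using divide_le_eq_1_pos[of "sqrt (x^2 + 1)" 1] by linarith
      then show "0 \<le> 1 - 1 / sqrt (x^2 + 1)" by simp
    qed
    show "continuous_on {0..w} (psi 1)" unfolding psi_def by (intro continuous_intros)
  qed
  then show ?thesis unfolding psi_def by simp
qed

lemma psi_ge: "k \<le> 1 \<Longrightarrow> 0 \<le> k \<Longrightarrow> 0 \<le> w \<Longrightarrow> (1 - k) * w \<le> psi k w"
  unfolding psi_def using arsinh_le[of w] by (simp add: algebra_simps mult_left_mono)

lemma psi_cont: "continuous_on A (psi k)"
  unfolding psi_def by (intro continuous_intros)

lemma psi_surj: "0 \<le> k \<Longrightarrow> k < 1 \<Longrightarrow> \<exists>w. psi k w = s"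
proof -
  assume k: "0 \<le> k" "k < 1"
  have pos: "\<exists>w. psi k w = s" if s: "0 \<le> s" for s
  proof -
    have "s \<le> psi k (s / (1 - k))" using psi_ge[of k "s / (1 - k)"] k s by simp
    moreover have "psi k 0 \<le> s" using s by simp
    ultimately show ?thesis
      using IVT'[of "psi k" 0 s "s / (1 - k)"] psi_cont k s by auto
  qed
  show ?thesis
  proof (cases "0 \<le> s")
    case True then show ?thesis using pos by blast
  next
    case False
    then obtain w where "psi k w = - s" using pos[of "-s"] by auto
    then have "psi k (-w) = s" using psi_odd by simp
    then show ?thesis by blast
  qed
qed

definition Phi :: "real \<Rightarrow> real \<Rightarrow> real" where
  "Phi k s = (THE w. psi k w = s)"

lemma Phi_unique: "k < 1 \<Longrightarrow> psi k w = s \<Longrightarrow> Phi k s = w"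
  unfolding Phi_def
  by (rule the_equality) (auto dest: strict_mono_eq[OF psi_strict_mono])

lemma psi_Phi: "0 \<le> k \<Longrightarrow> k < 1 \<Longrightarrow> psi k (Phi k s) = s"
  using psi_surj[of k s] Phi_unique[of k] by auto

lemma Phi_psi: "k < 1 \<Longrightarrow> Phi k (psi k w) = w"
  using Phi_unique by blast

lemma Phi_minus: "0 \<le> k \<Longrightarrow> k < 1 \<Longrightarrow> Phi k (-s) = - Phi k s"
  by (rule Phi_unique) (simp_all add: psi_odd psi_Phi)

lemma Phi_nonneg_iff: "0 \<le> k \<Longrightarrow> k < 1 \<Longrightarrow> 0 \<le> Phi k s \<longleftrightarrow> 0 \<le> s"
proof -
  assume k: "0 \<le> k" "k < 1"
  have "0 \<le> Phi k s \<longleftrightarrow> psi k 0 \<le> psi k (Phi k s)"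
    using strict_mono_less_eq[OF psi_strict_mono[OF k(2)]] by blast
  then show ?thesis using psi_Phi[OF k] by simp
qed

lemma Phi_pos_iff: "0 \<le> k \<Longrightarrow> k < 1 \<Longrightarrow> 0 < Phi k s \<longleftrightarrow> 0 < s"
proof -
  assume k: "0 \<le> k" "k < 1"
  have "0 < Phi k s \<longleftrightarrow> psi k 0 < psi k (Phi k s)"
    using strict_mono_less[OF psi_strict_mono[OF k(2)]] by blast
  then show ?thesis using psi_Phi[OF k] by simp
qed

lemma Phi_abs: "0 \<le> k \<Longrightarrow> k < 1 \<Longrightarrow> Phi k \<bar>s\<bar> = \<bar>Phi k s\<bar>"
  using Phi_minus[of k s] Phi_nonneg_iff[of k s] by (cases "0 \<le> s") auto

lemma sgn_Phi: "0 \<le> k \<Longrightarrow> k < 1 \<Longrightarrow> sgn (Phi k s) = sgn s"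
  using Phi_nonneg_iff[of k s] Phi_pos_iff[of k s] by (auto simp: sgn_if)

lemma Ck_sq: "Ck k S f \<Longrightarrow> Ck k S (\<lambda>x. (f x)^2)"
  using Ck_mult[of k S f f] by (simp add: power2_eq_square)

definition Phi2 :: "real \<times> real \<Rightarrow> real" where
  "Phi2 z = Phi (fst z) (snd z)"

definition S2 :: "(real \<times> real) set" where
  "S2 = {z. 0 < fst z \<and> fst z < 1}"

lemma open_S2: "open S2"
proof -
  have "S2 = {z. 0 < fst z} \<inter> {z. fst z < 1}" unfolding S2_def by auto
  moreover have "open {z::real\<times>real. 0 < fst z}"
    by (rule open_Collect_less) (intro continuous_intros)+
  moreover have "open {z::real\<times>real. fst z < 1}"
    by (rule open_Collect_less) (intro continuous_intros)+
  ultimately show ?thesis by (metis open_Int)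
qed

lemma Phi2_deriv:
  assumes z: "z \<in> S2"
  shows "(Phi2 has_derivative (\<lambda>h. (snd h + fst h * arsinh (Phi2 z)) / (1 - fst z / sqrt ((Phi2 z)^2 + 1)))) (at z)"
proof -
  obtain k s where zks: "z = (k, s)" by (cases z)
  have k: "0 < k" "k < 1" using z zks unfolding S2_def by auto
  define w where "w = Phi k s"
  define d where "d = 1 - k / sqrt (w^2 + 1)"
  have d: "0 < d" unfolding d_def using psi_deriv_pos k by simp
  define F where "F = (\<lambda>z::real\<times>real. (fst z, psi (fst z) (snd z)))"
  define g where "g = (\<lambda>z::real\<times>real. (fst z, Phi2 z))"
  define F' where "F' = (\<lambda>h::real\<times>real. (fst h, snd h * d - fst h * arsinh w))"
  define g' where "g' = (\<lambda>h::real\<times>real. (fst h, (snd h + fst h * arsinh w) / d))"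
  let ?y = "(k, w)"
  have y: "?y \<in> S2" using k unfolding S2_def by simp
  have Fy: "F ?y = z" unfolding F_def w_def zks using psi_Phi k by simp
  define c where "c = 1 / sqrt (w^2 + 1)"
  have a1: "(arsinh has_derivative (\<lambda>h. c * h)) (at w)"
    using arsinh_real_has_field_derivative[of w UNIV] unfolding c_def has_field_derivative_def .
  have sd: "((\<lambda>z::real\<times>real. snd z) has_derivative snd) (at ?y)"
    by (rule bounded_linear_imp_has_derivative[OF bounded_linear_snd])
  have fd: "((\<lambda>z::real\<times>real. fst z) has_derivative fst) (at ?y)"
    by (rule bounded_linear_imp_has_derivative[OF bounded_linear_fst])
  have a2: "((\<lambda>z::real\<times>real. arsinh (snd z)) has_derivative (\<lambda>h. c * snd h)) (at ?y)"
    using has_derivative_compose[OF sd, of arsinh] a1 by (simp add: o_def)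
  have a3: "((\<lambda>z::real\<times>real. fst z * arsinh (snd z)) has_derivative
      (\<lambda>h. fst ?y * (c * snd h) + fst h * arsinh (snd ?y))) (at ?y)"
    by (rule has_derivative_mult[OF fd a2])
  have a4: "((\<lambda>z::real\<times>real. psi (fst z) (snd z)) has_derivative (\<lambda>h. snd h * d - fst h * arsinh w)) (at ?y)"
  proof -
    have "((\<lambda>z::real\<times>real. snd z - fst z * arsinh (snd z)) has_derivative
      (\<lambda>h. snd h - (fst ?y * (c * snd h) + fst h * arsinh (snd ?y)))) (at ?y)"
      by (rule has_derivative_diff[OF sd a3])
    moreover have "(\<lambda>h. snd h - (fst ?y * (c * snd h) + fst h * arsinh (snd ?y))) =
       (\<lambda>h::real\<times>real. snd h * d - fst h * arsinh w)"
      by (rule ext) (simp add: d_def c_def algebra_simps)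
    ultimately show ?thesis unfolding psi_def by simp
  qed
  have Fd: "(F has_derivative F') (at ?y)"
    unfolding F_def F'_def by (rule has_derivative_Pair[OF fd a4])
  have "continuous_on S2 (\<lambda>x::real\<times>real. arsinh (snd x))"
    by (rule continuous_on_compose2[OF continuous_on_arsinh[of UNIV]]) (auto intro: continuous_intros)
  then have cont: "continuous_on S2 F" unfolding F_def psi_def by (intro continuous_intros)
  have gF: "g (F x) = x" if "x \<in> S2" for x
  proof -
    obtain a b where "x = (a, b)" by (cases x)
    then show ?thesis using that Phi_psi unfolding g_def F_def Phi2_def S2_def by simp
  qed
  have id: "F' \<circ> g' = id"
    unfolding F'_def g'_def using d by (auto simp: fun_eq_iff)
  have "(g has_derivative g') (at (F ?y))"
    by (rule has_derivative_inverse_strong[OF open_S2 y cont gF Fd id])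
  then have "((\<lambda>x. snd (g x)) has_derivative (\<lambda>h. snd (g' h))) (at z)"
    using Fy has_derivative_snd by fastforce
  moreover have "w = Phi2 z" unfolding w_def Phi2_def zks by simp
  ultimately show ?thesis unfolding g_def g'_def d_def zks by simp
qed

lemma Ck_Phi2: "Ck k S2 Phi2"
proof (induction k)
  case (Suc k)
  show ?case
  proof (rule CkI[of _ _ "\<lambda>z h. (snd h + fst h * arsinh (Phi2 z)) / (1 - fst z / sqrt ((Phi2 z)^2 + 1))"])
    show "(Phi2 has_derivative (\<lambda>h. (snd h + fst h * arsinh (Phi2 x)) / (1 - fst x / sqrt ((Phi2 x)^2 + 1)))) (at x)"
      if "x \<in> S2" for x using Phi2_deriv[OF that] .
    fix h :: "real \<times> real"
    have num: "Ck k S2 (\<lambda>z. snd h + fst h * arsinh (Phi2 z))"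
      by (rule Ck_add[OF Ck_const Ck_mult[OF Ck_const Ck_comp1[OF Ck_arsinh Suc.IH]]]) simp
    have sq: "Ck k S2 (\<lambda>z. sqrt ((Phi2 z)^2 + 1))"
      by (rule Ck_sqrt_comp[OF Ck_add[OF Ck_sq[OF Suc.IH] Ck_const]]) (smt (verit) zero_le_power2)
    have den: "Ck k S2 (\<lambda>z. 1 - fst z / sqrt ((Phi2 z)^2 + 1))"
      by (rule Ck_diff[OF Ck_const Ck_divide[OF Ck_linear[OF bounded_linear_fst] sq]]) (smt (verit) real_sqrt_gt_zero zero_le_power2)
    show "Ck k S2 (\<lambda>z. (snd h + fst h * arsinh (Phi2 z)) / (1 - fst z / sqrt ((Phi2 z)^2 + 1)))"
    proof (rule Ck_divide[OF num den])
      fix z assume "z \<in> S2"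
      then have "fst z < 1" by (simp add: S2_def)
      from psi_deriv_pos[OF this, of "Phi2 z"] show "1 - fst z / sqrt ((Phi2 z)^2 + 1) \<noteq> 0" by linarith
    qed
  qed
qed simp

lemma G_eq: "1 \<le> x \<Longrightarrow> G k x = psi k (sqrt (x^2 - 1))"
proof -
  assume x: "1 \<le> x"
  have "x^2 \<ge> 1" using x by (simp add: one_le_power)
  then have "sqrt (x^2 - 1) ^ 2 + 1 = x^2" by simp
  then have "sqrt (sqrt (x^2 - 1) ^ 2 + 1) = x" using x by simp
  then show ?thesis unfolding G_def psi_def arsinh_real_def by (simp add: add.commute)
qed

lemma inj_G: "k < 1 \<Longrightarrow> inj_on (G k) {1..}"
proof (rule inj_onI)
  fix x y assume k: "k < 1" and xy: "x \<in> {1..}" "y \<in> {1..}" "G k x = G k y"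
  then have "psi k (sqrt (x^2 - 1)) = psi k (sqrt (y^2 - 1))" using G_eq by simp
  then have "sqrt (x^2 - 1) = sqrt (y^2 - 1)" using strict_mono_eq[OF psi_strict_mono[OF k]] by blast
  then have "x^2 = y^2" by simp
  then show "x = y" using xy by (simp add: power2_eq_iff_nonneg)
qed

lemma H_eq: "0 \<le> k \<Longrightarrow> k < 1 \<Longrightarrow> 0 \<le> s \<Longrightarrow> H k s = sqrt (1 + (Phi k s)^2)"
proof -
  assume k: "0 \<le> k" "k < 1" and s: "0 \<le> s"
  define W where "W = Phi k s"
  have W: "0 \<le> W" unfolding W_def using Phi_nonneg_iff[OF k] s by simp
  have X: "1 \<le> sqrt (1 + W^2)" by simp
  have "sqrt (sqrt (1 + W^2) ^ 2 - 1) = W" using W by simp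
  then have "G k (sqrt (1 + W^2)) = s" using G_eq[OF X] psi_Phi[OF k] unfolding W_def by simp
  then show ?thesis unfolding H_def W_def[symmetric]
    by (rule the_inv_into_f_eq[OF inj_G[OF k(2)]]) (use X in simp)
qed




locale ctx =
  fixes m l :: real
  assumes m: "m > 0" and l: "l > 0"
begin

lemma kappa_bounds: "a > 0 \<Longrightarrow> 0 < kappa m a l \<and> kappa m a l < 1"
proof -
  assume a: "a > 0"
  have q: "0 < 4 * a^2 * l / m^2" using a l m by simp
  then have "1 < sqrt (1 + 4 * a^2 * l / m^2)" by simp
  then show ?thesis unfolding kappa_def by simp
qed

lemma kappa_sq: "(kappa m a l)^2 = 1 / (1 + 4 * a^2 * l / m^2)"
proof -
  have "0 \<le> 1 + 4 * a^2 * l / m^2" using l m by (simp add: add_nonneg_nonneg)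
  then show ?thesis unfolding kappa_def by (simp add: power_divide)
qed

lemma pp_pos: "a > 0 \<Longrightarrow> 0 < pp m a l"
  using kappa_bounds[of a] m unfolding pp_def by simp

lemma key1: "a > 0 \<Longrightarrow> a^2 * pp m a l * kappa m a l = m / 2"
  using kappa_bounds[of a] unfolding pp_def by (simp add: field_simps)

lemma key2: "a > 0 \<Longrightarrow> a^2 * (pp m a l)^2 * (1 - (kappa m a l)^2) = l"
proof -
  assume a: "a > 0"
  define K where "K = kappa m a l"
  have K: "0 < K" "K < 1" using kappa_bounds[OF a] unfolding K_def by auto
  have q: "0 < 1 + 4 * a^2 * l / m^2" using l m by (simp add: add_pos_nonneg)
  have K2: "K^2 * (1 + 4 * a^2 * l / m^2) = 1"
    using kappa_sq[of a] q unfolding K_def[symmetric] by simp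
  have "a^2 * (m / (2 * a^2 * K))^2 * (1 - K^2) = l"
  proof -
    have "1 - K^2 = K^2 * (4 * a^2 * l / m^2)" using K2 by (simp add: algebra_simps)
    then show ?thesis using a K m by (simp add: field_simps power2_eq_square)
  qed
  then show ?thesis unfolding pp_def K_def by simp
qed

lemma key_energy:
  assumes a: "a > 0"
  shows "a^2 * r^2 + m * r - l = a^2 * (pp m a l)^2 * ((r / pp m a l + kappa m a l)^2 - 1)"
proof -
  define K where "K = kappa m a l"
  define P where "P = pp m a l"
  have P: "P > 0" using pp_pos[OF a] unfolding P_def .
  have k1: "a^2 * P * K = m / 2" using key1[OF a] unfolding P_def K_def .
  have k2: "a^2 * P^2 * (1 - K^2) = l" using key2[OF a] unfolding P_def K_def .
  have "a^2 * P^2 * ((r / P + K)^2 - 1) = a^2 * (r + P * K)^2 - a^2 * P^2"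
    using P by (simp add: field_simps power2_eq_square)
  also have "\<dots> = a^2 * r^2 + 2 * r * (a^2 * P * K) - a^2 * P^2 * (1 - K^2)"
    by (simp add: algebra_simps power2_eq_square)
  also have "\<dots> = a^2 * r^2 + m * r - l" using k1 k2 by simp
  finally show ?thesis unfolding P_def K_def by simp
qed

lemma Rf_eq:
  assumes a: "a > 0"
  shows "Rf m l \<theta> a = pp m a l * sqrt (1 + (Phi (kappa m a l) (\<theta> / pp m a l))^2) - pp m a l * kappa m a l"
proof -
  define K where "K = kappa m a l"
  define P where "P = pp m a l"
  have K: "0 < K" "K < 1" using kappa_bounds[OF a] unfolding K_def by auto
  have P: "P > 0" using pp_pos[OF a] unfolding P_def .
  have eq: "\<bar>\<theta> / P\<bar> = \<bar>\<theta>\<bar> / P" using P by simp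
  have hq: "0 \<le> \<bar>\<theta>\<bar> / P" using P by simp
  have "H K (\<bar>\<theta>\<bar> / P) = sqrt (1 + (Phi K (\<bar>\<theta>\<bar> / P))^2)"
    using H_eq[OF _ _ hq] K by simp
  also have "\<dots> = sqrt (1 + (Phi K \<bar>\<theta> / P\<bar>)^2)" by (simp only: eq)
  also have "\<dots> = sqrt (1 + (Phi K (\<theta> / P))^2)"
    using Phi_abs[of K "\<theta> / P"] K by simp
  finally show ?thesis unfolding Rf_def K_def[symmetric] P_def[symmetric] by simp
qed

lemma map_props:
  fixes a \<theta> :: real
  assumes a: "a > 0"
  defines "K \<equiv> kappa m a l" and "P \<equiv> pp m a l"
  defines "W \<equiv> Phi K (\<theta> / P)"
  defines "X \<equiv> sqrt (1 + W^2)"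
  shows "Rf m l \<theta> a = P * (X - K)" "0 < Rf m l \<theta> a" "1 \<le> X" "K < X"
    "Vf m l \<theta> a = a * W / (X - K)"
    "(Vf m l \<theta> a)^2 - m / Rf m l \<theta> a + l / (Rf m l \<theta> a)^2 = a^2"
proof -
  have K: "0 < K" "K < 1" using kappa_bounds[OF a] unfolding K_def by auto
  have P: "P > 0" using pp_pos[OF a] unfolding P_def .
  show R: "Rf m l \<theta> a = P * (X - K)" using Rf_eq[OF a] unfolding X_def W_def K_def P_def by (simp add: algebra_simps)
  show X1: "1 \<le> X" unfolding X_def by simp
  show XK: "K < X" using X1 K by simp
  show Rpos: "0 < Rf m l \<theta> a" using R P XK by simp
  define R where "R = Rf m l \<theta> a"
  have XX: "R / P + K = X" using R P unfolding R_def by simp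
  have X2: "X^2 - 1 = W^2" unfolding X_def by simp
  have E: "a^2 * R^2 + m * R - l = a^2 * P^2 * W^2"
    using key_energy[OF a, of R] XX X2 unfolding P_def[symmetric] K_def[symmetric] by simp
  have Rp: "R > 0" using Rpos unfolding R_def .
  have "1 + m / (a^2 * R) - l / (a^2 * R^2) = (a^2 * R^2 + m * R - l) / (a^2 * R^2)"
    using a Rp by (simp add: field_simps power2_eq_square)
  also have "\<dots> = (P * W / R)^2" using E a Rp by (simp add: field_simps power2_eq_square)
  finally have inside: "1 + m / (a^2 * R) - l / (a^2 * R^2) = (W / (X - K))^2"
    using R unfolding R_def[symmetric] using P by (simp add: power_divide)
  have "sqrt (1 + m / (a^2 * R) - l / (a^2 * R^2)) = \<bar>W\<bar> / (X - K)"
    using inside XK by simp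
  moreover have "sgn \<theta> * \<bar>W\<bar> = W"
  proof -
    have "sgn W = sgn (\<theta> / P)" unfolding W_def using sgn_Phi K by simp
    also have "\<dots> = sgn \<theta>" using P by simp
    finally have "sgn \<theta> = sgn W" by simp
    then show ?thesis using sgn_mult_abs[of W] by simp
  qed
  ultimately show V: "Vf m l \<theta> a = a * W / (X - K)"
    unfolding Vf_def R_def[symmetric] by (metis (no_types, lifting) mult.commute mult.left_commute times_divide_eq_right)
  have "(a * W / (X - K))^2 = a^2 * (P * W / R)^2"
    using R P XK unfolding R_def[symmetric] by (simp add: power_divide power_mult_distrib)
  also have "\<dots> = a^2 + m / R - l / R^2"
    using E a Rp by (simp add: field_simps power2_eq_square)
  finally show "(Vf m l \<theta> a)^2 - m / Rf m l \<theta> a + l / (Rf m l \<theta> a)^2 = a^2"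
    using V unfolding R_def by simp
qed

lemma inv_props:
  fixes r v :: real
  assumes D: "(r, v) \<in> Dl m l"
  defines "A \<equiv> Af m l r v"
  defines "K \<equiv> kappa m A l" and "P \<equiv> pp m A l"
  defines "w \<equiv> v * r / (P * A)" and "x \<equiv> r / P + K"
  shows "0 < A" "0 < r" "x^2 = 1 + w^2" "1 \<le> x" "Theta m l r v = P * psi K w"
    "A^2 = v^2 - m / r + l / r^2"
proof -
  have r: "0 < r" and E: "0 < v^2 - m / r + l / r^2" using D unfolding Dl_def by auto
  show "0 < r" using r .
  show A: "0 < A" unfolding A_def Af_def using E by simp
  show A2: "A^2 = v^2 - m / r + l / r^2" unfolding A_def Af_def using E by simp
  have K: "0 < K" "K < 1" using kappa_bounds[OF A] unfolding K_def by auto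
  have P: "P > 0" using pp_pos[OF A] unfolding P_def .
  have "A^2 * r^2 + m * r - l = v^2 * r^2" using A2 r by (simp add: field_simps power2_eq_square)
  then have "v^2 * r^2 = A^2 * P^2 * (x^2 - 1)"
    using key_energy[OF A, of r] unfolding x_def P_def K_def by simp
  then have "w^2 = x^2 - 1" unfolding w_def using A P by (simp add: field_simps power2_eq_square)
  then show x2: "x^2 = 1 + w^2" by simp
  have rP: "0 < r / P" using r P by simp
  have xpos: "0 < x" using rP K unfolding x_def by linarith
  have "1 \<le> x^2" using x2 by simp
  then show x1: "1 \<le> x" using xpos by (metis abs_of_pos one_le_power abs_le_square_iff abs_one one_le_numeral power_one zero_le_one)
  have G: "G K x = psi K \<bar>w\<bar>" using G_eq[OF x1] x2 by simp
  have sw: "sgn w = sgn v"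
  proof -
    obtain c where c: "0 < c" "w = v * c"
      using r P A w_def by (intro that[of "r / (P * A)"]) auto
    then show ?thesis by (simp add: sgn_mult)
  qed
  have "sgn v * psi K \<bar>w\<bar> = psi K w"
  proof (cases "0 \<le> w")
    case True
    then show ?thesis using sw by (cases "w = 0") (auto simp: sgn_if split: if_splits)
  next
    case False
    then have "psi K \<bar>w\<bar> = - psi K w" using psi_odd[of K w] by simp
    moreover have "sgn v = -1" using sw False by (simp add: sgn_if split: if_splits)
    ultimately show ?thesis by simp
  qed
  then show "Theta m l r v = P * psi K w"
    unfolding Theta_def Let_def A_def[symmetric] K_def[symmetric] P_def[symmetric] x_def[symmetric] G
    by (metis mult.commute mult.left_commute)
qed

lemma map_in_D: "a > 0 \<Longrightarrow> canon_map m l (\<theta>, a) \<in> Dl m l"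
  using map_props[of a \<theta>] unfolding canon_map_def Dl_def by simp

lemma inv_map:
  assumes a: "a > 0"
  shows "canon_inv m l (canon_map m l (\<theta>, a)) = (\<theta>, a)"
proof -
  define K where "K = kappa m a l"
  define P where "P = pp m a l"
  define W where "W = Phi K (\<theta> / P)"
  define X where "X = sqrt (1 + W^2)"
  note mp = map_props[OF a, of \<theta>, folded K_def P_def, folded W_def, folded X_def]
  have K: "0 < K" "K < 1" using kappa_bounds[OF a] unfolding K_def by auto
  have P: "P > 0" using pp_pos[OF a] unfolding P_def .
  define R where "R = Rf m l \<theta> a"
  define V where "V = Vf m l \<theta> a"
  have D: "(R, V) \<in> Dl m l" using map_in_D[OF a, of \<theta>] unfolding canon_map_def R_def V_def by simp
  have A: "Af m l R V = a" unfolding Af_def R_def V_def using mp(6) a by simp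
  note ip = inv_props[OF D, unfolded A, folded K_def P_def]
  have XK: "X - K \<noteq> 0" using mp(4) by simp
  have "V * R = (a * W / (X - K)) * (P * (X - K))"
    using mp(1,5) unfolding R_def[symmetric] V_def[symmetric] by simp
  also have "\<dots> = a * W * P" using XK by simp
  finally have "V * R / (P * a) = W" using P a by simp
  then have "Theta m l R V = P * psi K (Phi K (\<theta> / P))" using ip(5) unfolding W_def by simp
  also have "\<dots> = \<theta>" using psi_Phi K P by simp
  finally have th: "Theta m l R V = \<theta>" .
  show ?thesis using th A unfolding canon_inv_def canon_map_def R_def V_def by simp
qed

lemma map_inv:
  assumes D: "z \<in> Dl m l"
  shows "canon_inv m l z \<in> UNIV \<times> {0<..}" "canon_map m l (canon_inv m l z) = z"
proof -
  obtain r v where z: "z = (r, v)" by (cases z)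
  define A where "A = Af m l r v"
  define K where "K = kappa m A l"
  define P where "P = pp m A l"
  define w where "w = v * r / (P * A)"
  define x where "x = r / P + K"
  have D': "(r, v) \<in> Dl m l" using D z by simp
  note ip = inv_props[OF D', folded A_def, folded K_def P_def, folded w_def x_def]
  have K: "0 < K" "K < 1" using kappa_bounds[OF ip(1)] unfolding K_def by auto
  have P: "P > 0" using pp_pos[OF ip(1)] unfolding P_def .
  show "canon_inv m l z \<in> UNIV \<times> {0<..}" unfolding canon_inv_def z using ip(1) A_def by simp
  define \<theta> where "\<theta> = Theta m l r v"
  have Ph: "Phi K (\<theta> / P) = w" unfolding \<theta>_def ip(5) using P Phi_psi K by simp
  have Xx: "sqrt (1 + w^2) = x" using ip(3,4) by (metis real_sqrt_unique zero_le_one order_trans)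
  note mp = map_props[OF ip(1), of \<theta>, folded K_def P_def, unfolded Ph Xx]
  have "Rf m l \<theta> A = r" using mp(1) P unfolding x_def by simp
  moreover have "Vf m l \<theta> A = v"
  proof -
    have "x - K = r / P" unfolding x_def by simp
    then show ?thesis using mp(5) P ip(1,2) unfolding w_def by (simp add: field_simps)
  qed
  ultimately show "canon_map m l (canon_inv m l z) = z"
    unfolding canon_inv_def canon_map_def z \<theta>_def A_def by simp
qed

lemma Ck_fst: "Ck k S (\<lambda>z::real\<times>real. fst z)"
  by (rule Ck_linear[OF bounded_linear_fst])

lemma Ck_snd: "Ck k S (\<lambda>z::real\<times>real. snd z)"
  by (rule Ck_linear[OF bounded_linear_snd])

lemma Ck_arsinh_comp: "Ck k S f \<Longrightarrow> Ck k S (\<lambda>x. arsinh (f x))"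
  using Ck_comp1[OF Ck_arsinh, of k S f] by simp

lemma kappa_pos_all: "0 < kappa m a l"
proof -
  have "0 < 1 + 4 * a^2 * l / m^2" using l m by (simp add: add_pos_nonneg)
  then show ?thesis unfolding kappa_def by simp
qed

lemma Ck_kappa: "Ck k S f \<Longrightarrow> Ck k S (\<lambda>x. kappa m (f x) l)"
proof -
  assume f: "Ck k S f"
  have "Ck k S (\<lambda>x. 1 / sqrt (1 + 4 * (f x)^2 * l / m^2))"
  proof (intro Ck_divide Ck_const Ck_sqrt_comp Ck_add Ck_mult Ck_sq f)
    fix x show "0 < 1 + 4 * (f x)^2 * l / m^2" using l m by (simp add: add_pos_nonneg)
    then show "sqrt (1 + 4 * (f x)^2 * l / m^2) \<noteq> 0" by simp
  qed (use m in simp)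
  then show ?thesis unfolding kappa_def .
qed

lemma Ck_pp: "Ck k S f \<Longrightarrow> (\<And>x. x \<in> S \<Longrightarrow> f x \<noteq> 0) \<Longrightarrow> Ck k S (\<lambda>x. pp m (f x) l)"
proof -
  assume f: "Ck k S f" and nz: "\<And>x. x \<in> S \<Longrightarrow> f x \<noteq> 0"
  have "Ck k S (\<lambda>x. m / (2 * (f x)^2 * kappa m (f x) l))"
  proof (intro Ck_divide Ck_const Ck_mult Ck_sq f Ck_kappa)
    fix x assume "x \<in> S"
    then have "f x \<noteq> 0" "kappa m (f x) l \<noteq> 0" using nz kappa_pos_all[of "f x"] by auto
    then show "2 * (f x)^2 * kappa m (f x) l \<noteq> 0" by simp
  qed
  then show ?thesis unfolding pp_def .
qed

lemma Ck_Phi: "Ck k S f \<Longrightarrow> Ck k S g \<Longrightarrow> (\<And>x. x \<in> S \<Longrightarrow> 0 < f x \<and> f x < 1) \<Longrightarrow> Ck k S (\<lambda>x. Phi (f x) (g x))"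
  using Ck_comp2[OF Ck_Phi2, of k S f g] unfolding Phi2_def S2_def by simp

lemma Ck_psi: "Ck k S f \<Longrightarrow> Ck k S g \<Longrightarrow> Ck k S (\<lambda>x. psi (f x) (g x))"
  unfolding psi_def by (intro Ck_diff Ck_mult Ck_arsinh_comp)

lemma open_S: "open (UNIV \<times> {0<..} :: (real \<times> real) set)"
  by (intro open_Times open_UNIV open_greaterThan)

lemma smooth_map: "Cinf_on (UNIV \<times> {0<..}) (canon_map m l)"
proof (rule smooth_Cinf_pair[OF open_S])
  let ?S = "UNIV \<times> {0<..} :: (real \<times> real) set"
  let ?K = "\<lambda>z::real\<times>real. kappa m (snd z) l"
  let ?P = "\<lambda>z::real\<times>real. pp m (snd z) l"
  let ?W = "\<lambda>z::real\<times>real. Phi (?K z) (fst z / ?P z)"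
  have Kb: "0 < ?K z \<and> ?K z < 1" if "z \<in> ?S" for z using kappa_bounds that by auto
  have Pp: "0 < ?P z" if "z \<in> ?S" for z using pp_pos that by auto
  have CK: "Ck k ?S ?K" for k by (rule Ck_kappa[OF Ck_snd])
  have CP: "Ck k ?S ?P" for k by (rule Ck_pp[OF Ck_snd]) auto
  have CW: "Ck k ?S ?W" for k by (rule Ck_Phi[OF CK Ck_divide[OF Ck_fst CP]]) (use Kb Pp in \<open>fastforce+\<close>)
  have CX: "Ck k ?S (\<lambda>z. sqrt (1 + (?W z)^2))" for k
    by (rule Ck_sqrt_comp[OF Ck_add[OF Ck_const Ck_sq[OF CW]]]) (simp add: add_pos_nonneg)
  show "smooth ?S (\<lambda>z. ?P z * sqrt (1 + (?W z)^2) - ?P z * ?K z)"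
    unfolding smooth_def using Ck_diff[OF Ck_mult[OF CP CX] Ck_mult[OF CP CK]] by blast
  have XK: "sqrt (1 + (?W z)^2) - ?K z \<noteq> 0" if "z \<in> ?S" for z
  proof -
    have "1 \<le> sqrt (1 + (?W z)^2)" by simp
    then show ?thesis using Kb[OF that] by linarith
  qed
  show "smooth ?S (\<lambda>z. snd z * ?W z / (sqrt (1 + (?W z)^2) - ?K z))"
    unfolding smooth_def using Ck_divide[OF Ck_mult[OF Ck_snd CW] Ck_diff[OF CX CK] XK] by blast
  fix z assume z: "z \<in> ?S"
  obtain \<theta> a where za: "z = (\<theta>, a)" by (cases z)
  have a: "a > 0" using z za by auto
  show "canon_map m l z = (?P z * sqrt (1 + (?W z)^2) - ?P z * ?K z, snd z * ?W z / (sqrt (1 + (?W z)^2) - ?K z))"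
    unfolding canon_map_def za using Rf_eq[OF a, of \<theta>] map_props(5)[OF a, of \<theta>] by simp
qed

lemma open_Dl: "open (Dl m l)"
proof -
  have eq: "Dl m l = {z. 0 < fst z} \<inter> {z. 0 < (snd z)^2 * (fst z)^2 - m * fst z + l}"
  proof (intro set_eqI iffI)
    fix z :: "real \<times> real" assume "z \<in> Dl m l"
    then obtain r v where z: "z = (r, v)" "0 < r" "0 < v^2 - m / r + l / r^2" unfolding Dl_def by auto
    then have "0 < (v^2 - m / r + l / r^2) * r^2" by simp
    also have "(v^2 - m / r + l / r^2) * r^2 = v^2 * r^2 - m * r + l" using z(2) by (simp add: field_simps power2_eq_square)
    finally show "z \<in> {z. 0 < fst z} \<inter> {z. 0 < (snd z)^2 * (fst z)^2 - m * fst z + l}" using z by simp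
  next
    fix z :: "real \<times> real" assume "z \<in> {z. 0 < fst z} \<inter> {z. 0 < (snd z)^2 * (fst z)^2 - m * fst z + l}"
    then obtain r v where z: "z = (r, v)" "0 < r" "0 < v^2 * r^2 - m * r + l" by (cases z) auto
    have "v^2 * r^2 - m * r + l = (v^2 - m / r + l / r^2) * r^2" using z(2) by (simp add: field_simps power2_eq_square)
    then have "0 < (v^2 - m / r + l / r^2) * r^2" using z(3) by simp
    then have "0 < v^2 - m / r + l / r^2" using z(2) by (simp add: zero_less_mult_iff)
    then show "z \<in> Dl m l" unfolding Dl_def using z by simp
  qed
  have o1: "open {z::real\<times>real. 0 < fst z}" by (intro open_Collect_less continuous_on_const continuous_on_fst continuous_on_id)
  have o2: "open {z::real\<times>real. 0 < (snd z)^2 * (fst z)^2 - m * fst z + l}"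
  proof (rule open_Collect_less)
    show "continuous_on UNIV (\<lambda>z::real\<times>real. 0::real)" by (rule continuous_on_const)
    show "continuous_on UNIV (\<lambda>z::real\<times>real. (snd z)^2 * (fst z)^2 - m * fst z + l)"
      by (intro continuous_on_add continuous_on_diff continuous_on_mult continuous_on_power continuous_on_const continuous_on_fst continuous_on_snd continuous_on_id)
  qed
  show ?thesis unfolding eq by (rule open_Int[OF o1 o2])
qed

lemma smooth_inv: "Cinf_on (Dl m l) (canon_inv m l)"
proof (rule smooth_Cinf_pair[OF open_Dl])
  let ?A = "\<lambda>z::real\<times>real. Af m l (fst z) (snd z)"
  let ?K = "\<lambda>z::real\<times>real. kappa m (?A z) l"
  let ?P = "\<lambda>z::real\<times>real. pp m (?A z) l"
  have D: "0 < fst z \<and> 0 < (snd z)^2 - m / fst z + l / (fst z)^2" if "z \<in> Dl m l" for z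
    using that unfolding Dl_def by auto
  have Ap: "0 < ?A z" if "z \<in> Dl m l" for z using D[OF that] unfolding Af_def by simp
  have fnz: "fst z \<noteq> 0" if "z \<in> Dl m l" for z using D[OF that] by simp
  have fnz2: "(fst z)^2 \<noteq> 0" if "z \<in> Dl m l" for z using fnz[OF that] by simp
  have Epos: "0 < (snd z)^2 - m / fst z + l / (fst z)^2" if "z \<in> Dl m l" for z using D[OF that] by simp
  have CA: "Ck k (Dl m l) ?A" for k
  proof -
    have c1: "Ck k (Dl m l) (\<lambda>z. m / fst z)" by (rule Ck_divide[OF Ck_const Ck_fst fnz])
    have c2: "Ck k (Dl m l) (\<lambda>z. l / (fst z)^2)" by (rule Ck_divide[OF Ck_const Ck_sq[OF Ck_fst] fnz2])
    have "Ck k (Dl m l) (\<lambda>z. sqrt ((snd z)^2 - m / fst z + l / (fst z)^2))"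
      by (rule Ck_sqrt_comp[OF Ck_add[OF Ck_diff[OF Ck_sq[OF Ck_snd] c1] c2] Epos])
    then show ?thesis unfolding Af_def .
  qed
  have CK: "Ck k (Dl m l) ?K" for k by (rule Ck_kappa[OF CA])
  have CP: "Ck k (Dl m l) ?P" for k by (rule Ck_pp[OF CA]) (use Ap in fastforce)
  have Pp: "0 < ?P z" if "z \<in> Dl m l" for z using pp_pos Ap[OF that] by blast
  have CW: "Ck k (Dl m l) (\<lambda>z. snd z * fst z / (?P z * ?A z))" for k
  proof (rule Ck_divide[OF Ck_mult[OF Ck_snd Ck_fst] Ck_mult[OF CP CA]])
    fix z assume "z \<in> Dl m l"
    then show "?P z * ?A z \<noteq> 0" using Pp Ap by (metis less_irrefl mult_pos_pos)
  qed
  show "smooth (Dl m l) (\<lambda>z. ?P z * psi (?K z) (snd z * fst z / (?P z * ?A z)))"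
    unfolding smooth_def using Ck_mult[OF CP Ck_psi[OF CK CW]] by blast
  show "smooth (Dl m l) ?A" unfolding smooth_def using CA by blast
  fix z assume z: "z \<in> Dl m l"
  obtain r v where zr: "z = (r, v)" by (cases z)
  show "canon_inv m l z = (?P z * psi (?K z) (snd z * fst z / (?P z * ?A z)), ?A z)"
    using inv_props(5)[of r v] z unfolding canon_inv_def zr by (simp add: mult.commute)
qed

end




context ctx begin

lemma W_deriv:
  fixes a \<theta> t :: real
  assumes a: "a > 0"
  defines "K \<equiv> kappa m a l" and "P \<equiv> pp m a l"
  defines "Wt \<equiv> Phi K ((\<theta> + t * a) / P)"
  shows "((\<lambda>s. Phi K ((\<theta> + s * a) / P)) has_real_derivative (a / P) / (1 - K / sqrt (Wt^2 + 1))) (at t)"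
proof -
  have K: "0 < K" "K < 1" using kappa_bounds[OF a] unfolding K_def by auto
  have P: "P > 0" using pp_pos[OF a] unfolding P_def .
  define z0 where "z0 = (K, (\<theta> + t * a) / P)"
  have z0: "z0 \<in> S2" unfolding z0_def S2_def using K by simp
  have gd: "((\<lambda>s. (K, (\<theta> + s * a) / P)) has_derivative (\<lambda>h. (0, h * (a / P)))) (at t)"
    using P by (auto intro!: derivative_eq_intros simp: field_simps)
  have "((\<lambda>s. Phi2 (K, (\<theta> + s * a) / P)) has_derivative
      (\<lambda>h. (snd (0::real, h * (a / P)) + fst (0::real, h * (a / P)) * arsinh (Phi2 z0)) / (1 - fst z0 / sqrt ((Phi2 z0)^2 + 1)))) (at t)"
    using has_derivative_compose[OF gd Phi2_deriv[OF z0, unfolded z0_def]] unfolding z0_def by (simp add: o_def)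
  moreover have "Phi2 z0 = Wt" unfolding z0_def Phi2_def Wt_def by simp
  ultimately have "((\<lambda>s. Phi K ((\<theta> + s * a) / P)) has_derivative (\<lambda>h. (a / P) / (1 - K / sqrt (Wt^2 + 1)) * h)) (at t)"
    unfolding Phi2_def z0_def by (simp add: field_simps)
  then show ?thesis unfolding has_field_derivative_def
    by (rule has_derivative_eq_rhs) (simp add: fun_eq_iff)
qed

lemma ode_R:
  fixes a \<theta> t :: real
  assumes a: "a > 0"
  shows "((\<lambda>s. Rf m l (\<theta> + s * a) a) has_real_derivative Vf m l (\<theta> + t * a) a) (at t)"
proof -
  define K where "K = kappa m a l"
  define P where "P = pp m a l"
  define W where "W = (\<lambda>s. Phi K ((\<theta> + s * a) / P))"
  define X where "X = sqrt (1 + (W t)^2)"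
  define d where "d = 1 - K / X"
  have K: "0 < K" "K < 1" using kappa_bounds[OF a] unfolding K_def by auto
  have P: "P > 0" using pp_pos[OF a] unfolding P_def .
  have X1: "1 \<le> X" unfolding X_def by simp
  have pos: "0 < 1 + (W t)^2" by (simp add: add_pos_nonneg)
  have Xp: "0 < X" using X1 by simp
  have dnz: "d \<noteq> 0" unfolding d_def using X1 K Xp by (simp add: field_simps)
  have WD: "(W has_real_derivative (a / P) / d) (at t)"
    using W_deriv[OF a, of \<theta> t] unfolding W_def d_def X_def K_def P_def by (simp add: add.commute)
  have Req: "(\<lambda>s. Rf m l (\<theta> + s * a) a) = (\<lambda>s. P * sqrt (1 + (W s)^2) - P * K)"
    using Rf_eq[OF a] unfolding W_def P_def K_def by (simp add: fun_eq_iff)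
  have "((\<lambda>s. P * sqrt (1 + (W s)^2) - P * K) has_real_derivative P * (W t * ((a / P) / d) / X)) (at t)"
    using pos dnz by (auto intro!: derivative_eq_intros WD simp: X_def[symmetric] field_simps)
  moreover have "P * (W t * ((a / P) / d) / X) = a * W t / (X - K)"
    using P X1 K unfolding d_def by (simp add: field_simps)
  moreover have "Vf m l (\<theta> + t * a) a = a * W t / (X - K)"
    using map_props(5)[OF a, of "\<theta> + t * a"] unfolding W_def X_def K_def P_def by simp
  ultimately show ?thesis unfolding Req by simp
qed

lemma ode_V:
  fixes a \<theta> t :: real
  assumes a: "a > 0"
  shows "((\<lambda>s. Vf m l (\<theta> + s * a) a) has_real_derivative
     (l / (Rf m l (\<theta> + t * a) a)^3 - m / 2 * (1 / (Rf m l (\<theta> + t * a) a)^2))) (at t)"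
proof -
  define K where "K = kappa m a l"
  define P where "P = pp m a l"
  define W where "W = (\<lambda>s. Phi K ((\<theta> + s * a) / P))"
  define X where "X = sqrt (1 + (W t)^2)"
  define d where "d = 1 - K / X"
  have K: "0 < K" "K < 1" using kappa_bounds[OF a] unfolding K_def by auto
  have P: "P > 0" using pp_pos[OF a] unfolding P_def .
  have X1: "1 \<le> X" unfolding X_def by simp
  have Xp: "0 < X" using X1 by simp
  have XK: "0 < X - K" using X1 K by simp
  have X2: "(W t)^2 = X^2 - 1" unfolding X_def by simp
  have k1: "a^2 * P * K = m / 2" using key1[OF a] unfolding P_def K_def .
  have k2: "a^2 * P^2 * (1 - K^2) = l" using key2[OF a] unfolding P_def K_def .
  have WD0: "(W has_real_derivative (a / P) / d) (at t)"
    using W_deriv[OF a, of \<theta> t] unfolding W_def d_def X_def K_def P_def by (simp add: add.commute)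
  have "(a / P) / d = a * X / (P * (X - K))" unfolding d_def using Xp P XK by (simp add: field_simps)
  then have WD: "(W has_real_derivative a * X / (P * (X - K))) (at t)" using WD0 by simp
  have Veq: "(\<lambda>s. Vf m l (\<theta> + s * a) a) = (\<lambda>s. a * W s / (sqrt (1 + (W s)^2) - K))"
    using map_props(5)[OF a] unfolding W_def P_def K_def by (simp add: fun_eq_iff)
  have pos: "0 < 1 + (W t)^2" by (simp add: add_pos_nonneg)
  define W' where "W' = a * X / (P * (X - K))"
  have WD': "(W has_real_derivative W') (at t)" using WD unfolding W'_def .
  have SD: "((\<lambda>s. sqrt (1 + (W s)^2)) has_real_derivative W t * W' / X) (at t)"
    using pos Xp WD' by (auto intro!: derivative_eq_intros simp: X_def[symmetric] field_simps)
  have gnz: "sqrt (1 + (W t)^2) - K \<noteq> 0" using XK unfolding X_def by simp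
  have "((\<lambda>s. a * W s / (sqrt (1 + (W s)^2) - K)) has_real_derivative
        ((a * W') * (sqrt (1 + (W t)^2) - K) - a * W t * (W t * W' / X - 0)) / ((sqrt (1 + (W t)^2) - K) * (sqrt (1 + (W t)^2) - K))) (at t)"
    by (intro DERIV_divide DERIV_cmult DERIV_diff SD WD' DERIV_const gnz)
  moreover have "((a * W') * (sqrt (1 + (W t)^2) - K) - a * W t * (W t * W' / X - 0)) / ((sqrt (1 + (W t)^2) - K) * (sqrt (1 + (W t)^2) - K))
     = (a * W' * (X - K) - a * (W t)^2 * W' / X) / (X - K)^2"
    unfolding X_def[symmetric] by (simp add: power2_eq_square)
  ultimately have "((\<lambda>s. a * W s / (sqrt (1 + (W s)^2) - K)) has_real_derivative
        (a * W' * (X - K) - a * (W t)^2 * W' / X) / (X - K)^2) (at t)" by simp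
  moreover have "(a * W' * (X - K) - a * (W t)^2 * W' / X) / (X - K)^2 = a^2 * (1 - K * X) / (P * (X - K)^3)"
  proof -
    obtain D where D: "X = D + K" "0 < D" using XK by (intro that[of "X - K"]) auto
    have Xn: "D + K \<noteq> 0" using Xp D by simp
    have XD: "X - K = D" using D by simp
    have t1: "a * (a * X / (P * D)) * D = a^2 * X / P" using D(2) P by (simp add: field_simps power2_eq_square)
    have t2: "a * (X^2 - 1) * (a * X / (P * D)) / X = a^2 * (X^2 - 1) / (P * D)"
      using D(2) P Xp by (simp add: field_simps power2_eq_square)
    have t3: "a^2 * X / P - a^2 * (X^2 - 1) / (P * D) = a^2 * (1 - K * X) / (P * D)"
      using D P unfolding D(1) by (simp add: field_simps power2_eq_square)
    have t4: "a^2 * (1 - K * X) / (P * D) / D^2 = a^2 * (1 - K * X) / (P * D^3)"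
      using D(2) P by (simp add: field_simps power2_eq_square power3_eq_cube)
    show ?thesis unfolding X2 W'_def XD using t1 t2 t3 t4 by simp
  qed
  ultimately have "((\<lambda>s. a * W s / (sqrt (1 + (W s)^2) - K)) has_real_derivative a^2 * (1 - K * X) / (P * (X - K)^3)) (at t)"
    by simp
  moreover have "Rf m l (\<theta> + t * a) a = P * (X - K)"
    using map_props(1)[OF a, of "\<theta> + t * a"] unfolding W_def X_def K_def P_def by simp
  moreover have "a^2 * (1 - K * X) / (P * (X - K)^3) = l / (P * (X - K))^3 - m / 2 * (1 / (P * (X - K))^2)"
  proof -
    have mm: "m = 2 * (a^2 * P * K)" using k1 by simp
    obtain D where D: "X = D + K" "0 < D" using XK by (intro that[of "X - K"]) auto
    show ?thesis unfolding k2[symmetric] mm D(1) using P D(2) by (simp add: field_simps power2_eq_square power3_eq_cube)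
  qed
  ultimately show ?thesis unfolding Veq by simp
qed

lemma Cinf_deriv:
  assumes "Cinf_on S F" "open S" "x \<in> S"
  shows "\<exists>L. (F has_derivative L) (at x)"
proof -
  obtain D where D: "\<forall>x\<in>S. D 0 [] x = F x"
    "\<forall>k hs x. length hs = k \<and> x \<in> S \<longrightarrow> (D k hs has_derivative (\<lambda>h. D (Suc k) (h # hs) x)) (at x)"
    using assms(1) unfolding Cinf_on_def by blast
  have "(D 0 [] has_derivative (\<lambda>h. D (Suc 0) [h] x)) (at x)" using D(2)[rule_format, of "[]" 0 x] assms(3) by simp
  then have "(F has_derivative (\<lambda>h. D (Suc 0) [h] x)) (at x)"
    by (rule has_derivative_transform_within_open[OF _ assms(2,3)]) (use D(1) in auto)
  then show ?thesis by blast
qed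

lemma E_deriv:
  assumes R: "R > 0"
  shows "((\<lambda>z::real\<times>real. (snd z)^2 - m / fst z + l / (fst z)^2) has_derivative
     (\<lambda>h. 2 * V * snd h + (m / R^2 - 2 * l / R^3) * fst h)) (at (R, V))"
proof -
  have "((\<lambda>z::real\<times>real. (snd z)^2 - m / fst z + l / (fst z)^2) has_derivative
     (\<lambda>h. 2 * V * snd h + (m / R^2 - 2 * l / R^3) * fst h)) (at (R, V))"
    using R by (auto intro!: derivative_eq_intros simp: fun_eq_iff field_simps power2_eq_square power3_eq_cube)
  then show ?thesis .
qed

lemma jacobian:
  assumes a: "a > 0"
  shows "\<exists>L. (canon_map m l has_derivative L) (at (\<theta>, a)) \<and>
          fst (L (1, 0)) * snd (L (0, 1)) - fst (L (0, 1)) * snd (L (1, 0)) = 1"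
proof -
  let ?S = "UNIV \<times> {0<..} :: (real \<times> real) set"
  have x: "(\<theta>, a) \<in> ?S" using a by simp
  obtain L where L: "(canon_map m l has_derivative L) (at (\<theta>, a))"
    using Cinf_deriv[OF smooth_map open_S x] by blast
  have linL: "linear L" using L has_derivative_linear by blast
  define R where "R = Rf m l \<theta> a"
  define V where "V = Vf m l \<theta> a"
  define Fv where "Fv = l / R^3 - m / 2 * (1 / R^2)"
  have Rp: "R > 0" using map_props(2)[OF a] unfolding R_def .
  have cm: "canon_map m l (\<theta>, a) = (R, V)" unfolding canon_map_def R_def V_def by simp
  have gd: "((\<lambda>s::real. (\<theta> + s * a, a)) has_derivative (\<lambda>h. (h * a, 0))) (at 0)"
    by (auto intro!: derivative_eq_intros)
  have cd: "((\<lambda>s. canon_map m l (\<theta> + s * a, a)) has_derivative (\<lambda>h. L (h * a, 0))) (at 0)"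
    using has_derivative_compose[OF gd, of "canon_map m l" L] L by (simp add: o_def)
  have c1: "((\<lambda>s. fst (canon_map m l (\<theta> + s * a, a))) has_derivative (\<lambda>h. fst (L (h * a, 0)))) (at 0)"
    using has_derivative_fst[OF cd] .
  have c2: "((\<lambda>s. snd (canon_map m l (\<theta> + s * a, a))) has_derivative (\<lambda>h. snd (L (h * a, 0)))) (at 0)"
    using has_derivative_snd[OF cd] .
  have r1: "((\<lambda>s. fst (canon_map m l (\<theta> + s * a, a))) has_derivative (\<lambda>h. V * h)) (at 0)"
    using ode_R[OF a, of \<theta> 0] unfolding canon_map_def has_field_derivative_def V_def by simp
  have r2: "((\<lambda>s. snd (canon_map m l (\<theta> + s * a, a))) has_derivative (\<lambda>h. Fv * h)) (at 0)"
    using ode_V[OF a, of \<theta> 0] unfolding canon_map_def has_field_derivative_def Fv_def R_def by simp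
  have "fst (L (1 * a, 0)) = V * 1" using has_derivative_unique[OF c1 r1] by metis
  moreover have "snd (L (1 * a, 0)) = Fv * 1" using has_derivative_unique[OF c2 r2] by metis
  moreover have "L (a, 0) = a *\<^sub>R L (1, 0)" using linear_scale[OF linL, of a "(1, 0)"] by simp
  ultimately have L10: "fst (L (1, 0)) = V / a" "snd (L (1, 0)) = Fv / a" using a by (auto simp: field_simps)
  define E where "E = (\<lambda>z::real\<times>real. (snd z)^2 - m / fst z + l / (fst z)^2)"
  have ED: "(E has_derivative (\<lambda>h. 2 * V * snd h + (m / R^2 - 2 * l / R^3) * fst h)) (at (canon_map m l (\<theta>, a)))"
    unfolding cm E_def by (rule E_deriv[OF Rp])
  have EF: "((\<lambda>z. E (canon_map m l z)) has_derivative (\<lambda>h. 2 * V * snd (L h) + (m / R^2 - 2 * l / R^3) * fst (L h))) (at (\<theta>, a))"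
    using has_derivative_compose[OF L ED] by (simp add: o_def)
  have eq: "E (canon_map m l z) = (snd z)^2" if "z \<in> ?S" for z
  proof -
    obtain t b where z: "z = (t, b)" by (cases z)
    have "b > 0" using that z by simp
    then show ?thesis using map_props(6)[of b t] unfolding E_def canon_map_def z by simp
  qed
  have SD: "((\<lambda>z::real\<times>real. (snd z)^2) has_derivative (\<lambda>h. 2 * a * snd h)) (at (\<theta>, a))"
    by (auto intro!: derivative_eq_intros simp: fun_eq_iff)
  have EF2: "((\<lambda>z. E (canon_map m l z)) has_derivative (\<lambda>h. 2 * a * snd h)) (at (\<theta>, a))"
    by (rule has_derivative_transform_within_open[OF SD open_S x]) (use eq in auto)
  have "(\<lambda>h. 2 * V * snd (L h) + (m / R^2 - 2 * l / R^3) * fst (L h)) = (\<lambda>h. 2 * a * snd h)"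
    using has_derivative_unique[OF EF EF2] .
  then have L01: "2 * V * snd (L (0, 1)) + (m / R^2 - 2 * l / R^3) * fst (L (0, 1)) = 2 * a"
    by (metis snd_conv mult_1_right)
  have cst: "m / R^2 - 2 * l / R^3 = - 2 * Fv" unfolding Fv_def by (simp add: field_simps)
  have "2 * V * snd (L (0, 1)) + (- 2 * Fv) * fst (L (0, 1)) = 2 * a" using L01 unfolding cst .
  then have "V * snd (L (0, 1)) - Fv * fst (L (0, 1)) = a" by linarith
  then have "fst (L (1, 0)) * snd (L (0, 1)) - fst (L (0, 1)) * snd (L (1, 0)) = 1"
    unfolding L10 using a by (simp add: field_simps)
  then show ?thesis using L by blast
qed

lemma zero_deriv_const:
  fixes f :: "real \<Rightarrow> real"
  assumes "convex I" "\<And>t. t \<in> I \<Longrightarrow> (f has_real_derivative 0) (at t)"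
  shows "\<exists>c. \<forall>t\<in>I. f t = c"
proof (rule has_derivative_zero_constant[OF assms(1)])
  fix x assume "x \<in> I"
  then have "(f has_derivative (*) 0) (at x)" using assms(2) by (simp add: has_field_derivative_def)
  moreover have "((*) (0::real)) = (\<lambda>h. 0)" by auto
  ultimately have "(f has_derivative (\<lambda>h. 0)) (at x)" by simp
  then show "(f has_derivative (\<lambda>h. 0)) (at x within I)" using has_derivative_subset[of f _ x UNIV I] by simp
qed

lemma ode_solutions:
  fixes I :: "real set" and r v :: "real \<Rightarrow> real"
  assumes I: "open I" "is_interval I"
    and sol: "\<forall>t\<in>I. (r has_real_derivative v t) (at t) \<and>
                  (v has_real_derivative (l / (r t)^3 - m / 2 * (1 / (r t)^2))) (at t) \<and>
                  (r t, v t) \<in> Dl m l"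
  shows "\<exists>\<theta> a. a > 0 \<and> (\<forall>t\<in>I. (r t, v t) = canon_map m l (\<theta> + t * a, a))"
proof (cases "I = {}")
  case True then show ?thesis by (intro exI[of _ 0] exI[of _ 1]) simp
next
  case False
  then obtain t0 where t0: "t0 \<in> I" by blast
  have cI: "convex I" using is_interval_convex[OF I(2)] .
  have rD: "(r has_real_derivative v t) (at t)" if "t \<in> I" for t using sol that by blast
  have vD: "(v has_real_derivative (l / (r t)^3 - m / 2 * (1 / (r t)^2))) (at t)" if "t \<in> I" for t using sol that by blast
  have inD: "(r t, v t) \<in> Dl m l" if "t \<in> I" for t using sol that by blast
  have rpos: "0 < r t" if "t \<in> I" for t using inD[OF that] unfolding Dl_def by simp
  define E where "E = (\<lambda>t. (v t)^2 - m / r t + l / (r t)^2)"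
  have ED: "(E has_real_derivative 0) (at t)" if t: "t \<in> I" for t
    unfolding E_def using rpos[OF t]
    by (auto intro!: derivative_eq_intros rD[OF t] vD[OF t] simp: field_simps power2_eq_square power3_eq_cube)
  obtain c where c: "\<forall>t\<in>I. E t = c" using zero_deriv_const[OF cI ED] by blast
  have cpos: "0 < c" using inD[OF t0] c t0 unfolding Dl_def E_def by auto
  define a where "a = sqrt c"
  have a: "0 < a" unfolding a_def using cpos by simp
  have Aa: "Af m l (r t) (v t) = a" if "t \<in> I" for t using c that unfolding Af_def a_def E_def by simp
  define K where "K = kappa m a l"
  define P where "P = pp m a l"
  have K: "0 < K" "K < 1" using kappa_bounds[OF a] unfolding K_def by auto
  have P: "P > 0" using pp_pos[OF a] unfolding P_def .
  have k1: "a^2 * P * K = m / 2" using key1[OF a] unfolding P_def K_def .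
  define w where "w = (\<lambda>s. v s * r s / (P * a))"
  define th where "th = (\<lambda>s. P * psi K (w s))"
  have thD: "(th has_real_derivative a) (at t)" if t: "t \<in> I" for t
  proof -
    define Ft where "Ft = l / (r t)^3 - m / 2 * (1 / (r t)^2)"
    define w' where "w' = (Ft * r t + v t * v t) / (P * a)"
    have wD: "(w has_real_derivative w') (at t)"
      unfolding w_def w'_def Ft_def using P a
      by (auto intro!: derivative_eq_intros rD[OF t] vD[OF t] simp: field_simps)
    have "(th has_real_derivative P * ((1 - K / sqrt ((w t)^2 + 1)) * w')) (at t)"
      unfolding th_def by (intro DERIV_cmult DERIV_chain2[OF psi_deriv wD])
    moreover have "P * ((1 - K / sqrt ((w t)^2 + 1)) * w') = a"
    proof -
      note ip = inv_props[OF inD[OF t], unfolded Aa[OF t], folded K_def P_def]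
      define x where "x = r t / P + K"
      have x2: "x^2 = 1 + (w t)^2" using ip(3) unfolding x_def w_def by simp
      have x1: "1 \<le> x" using ip(4) unfolding x_def .
      have sq: "sqrt ((w t)^2 + 1) = x" using x2 x1 by (simp add: add.commute real_sqrt_unique)
      have rp: "0 < r t" using rpos[OF t] .
      have a2: "a^2 = (v t)^2 - m / r t + l / (r t)^2" using ip(6) .
      have e1: "Ft * r t + v t * v t = a^2 + m / (2 * r t)"
        unfolding Ft_def a2 using rp by (simp add: field_simps power2_eq_square power3_eq_cube)
      have e2: "1 - K / x = (r t / P) / x" using x1 unfolding x_def by (simp add: field_simps)
      have e3: "P * x = r t + P * K" unfolding x_def using P by (simp add: field_simps)
      have "P * ((1 - K / sqrt ((w t)^2 + 1)) * w') = P * ((r t / P) / x) * ((a^2 + m / (2 * r t)) / (P * a))"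
        unfolding sq e2 w'_def e1 by simp
      also have "\<dots> = (a^2 * r t + m / 2) / (a * (P * x))"
        using P a x1 rp by (simp add: field_simps)
      also have "\<dots> = (a^2 * r t + a^2 * P * K) / (a * (r t + P * K))" unfolding e3 k1 by simp
      also have "\<dots> = (a * (a * (r t + P * K))) / (a * (r t + P * K))" by (simp add: algebra_simps power2_eq_square)
      also have "\<dots> = a"
      proof -
        have "0 < r t + P * K" using rp mult_pos_pos[OF P K(1)] by linarith
        then have "a * (r t + P * K) \<noteq> 0" using a by simp
        then show ?thesis by (rule nonzero_mult_div_cancel_right)
      qed
      finally show ?thesis .
    qed
    ultimately show ?thesis by simp
  qed
  have GD: "((\<lambda>s. th s - s * a) has_real_derivative 0) (at t)" if t: "t \<in> I" for t
    using DERIV_diff[OF thD[OF t] DERIV_cmult_right[OF DERIV_ident, of a]] by simp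
  obtain \<theta>0 where th0: "\<forall>t\<in>I. th t - t * a = \<theta>0" using zero_deriv_const[OF cI GD] by blast
  have "\<forall>t\<in>I. (r t, v t) = canon_map m l (\<theta>0 + t * a, a)"
  proof
    fix t assume t: "t \<in> I"
    have "canon_inv m l (r t, v t) = (th t, a)"
      using inv_props(5)[OF inD[OF t]] Aa[OF t] unfolding canon_inv_def th_def w_def K_def P_def by simp
    then have "(r t, v t) = canon_map m l (th t, a)" using map_inv(2)[OF inD[OF t]] by simp
    moreover have "th t = \<theta>0 + t * a" using th0 t by force
    ultimately show "(r t, v t) = canon_map m l (\<theta>0 + t * a, a)" by simp
  qed
  then show ?thesis using a by blast
qed

end

theorem proposition2p6:
  fixes m l :: real
  assumes "m > 0" and "l > 0"
  shows "bij_betw (canon_map m l) (UNIV \<times> {0<..}) (Dl m l)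
    \<and> (\<forall>x\<in>UNIV \<times> {0<..}. canon_inv m l (canon_map m l x) = x)
    \<and> (\<forall>z\<in>Dl m l. canon_inv m l z \<in> UNIV \<times> {0<..} \<and> canon_map m l (canon_inv m l z) = z)
    \<and> Cinf_on (UNIV \<times> {0<..}) (canon_map m l)
    \<and> Cinf_on (Dl m l) (canon_inv m l)
    \<and> (\<forall>x\<in>UNIV \<times> {0<..}. \<exists>L. (canon_map m l has_derivative L) (at x) \<and>
          fst (L (1, 0)) * snd (L (0, 1)) - fst (L (0, 1)) * snd (L (1, 0)) = 1)
    \<and> (\<forall>(I :: real set) (r :: real \<Rightarrow> real) (v :: real \<Rightarrow> real).
          open I \<and> is_interval I \<and>
          (\<forall>t\<in>I. (r has_real_derivative v t) (at t) \<and>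
                  (v has_real_derivative (l / (r t)^3 - m / 2 * (1 / (r t)^2))) (at t) \<and>
                  (r t, v t) \<in> Dl m l)
          \<longrightarrow> (\<exists>\<theta> a. a > 0 \<and> (\<forall>t\<in>I. (r t, v t) = canon_map m l (\<theta> + t * a, a))))
    \<and> (\<forall>\<theta> a. a > 0 \<longrightarrow>
          (\<forall>t. ((\<lambda>s. fst (canon_map m l (\<theta> + s * a, a))) has_real_derivative
                   snd (canon_map m l (\<theta> + t * a, a))) (at t) \<and>
               ((\<lambda>s. snd (canon_map m l (\<theta> + s * a, a))) has_real_derivative
                   (l / (fst (canon_map m l (\<theta> + t * a, a)))^3
                    - m / 2 * (1 / (fst (canon_map m l (\<theta> + t * a, a)))^2))) (at t) \<and>
               canon_map m l (\<theta> + t * a, a) \<in> Dl m l))"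
proof -
  interpret ctx m l using assms by unfold_locales
  have A: "\<forall>x\<in>UNIV \<times> {0<..}. canon_inv m l (canon_map m l x) = x"
  proof
    fix x :: "real \<times> real" assume "x \<in> UNIV \<times> {0<..}"
    then obtain t b where x: "x = (t, b)" "b > 0" by (cases x) auto
    show "canon_inv m l (canon_map m l x) = x" unfolding x using inv_map[OF x(2)] .
  qed
  have B: "\<forall>z\<in>Dl m l. canon_inv m l z \<in> UNIV \<times> {0<..} \<and> canon_map m l (canon_inv m l z) = z"
    using map_inv by blast
  have C: "canon_map m l ` (UNIV \<times> {0<..}) \<subseteq> Dl m l"
  proof
    fix y assume "y \<in> canon_map m l ` (UNIV \<times> {0<..})"
    then obtain t b where "y = canon_map m l (t, b)" "b > 0" by auto
    then show "y \<in> Dl m l" using map_in_D by simp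
  qed
  have bij: "bij_betw (canon_map m l) (UNIV \<times> {0<..}) (Dl m l)"
    by (rule bij_betw_byWitness[where f' = "canon_inv m l"]) (use A B C in auto)
  have J: "\<forall>x\<in>UNIV \<times> {0<..}. \<exists>L. (canon_map m l has_derivative L) (at x) \<and>
          fst (L (1, 0)) * snd (L (0, 1)) - fst (L (0, 1)) * snd (L (1, 0)) = 1"
  proof
    fix x :: "real \<times> real" assume "x \<in> UNIV \<times> {0<..}"
    then obtain t b where x: "x = (t, b)" "b > 0" by (cases x) auto
    show "\<exists>L. (canon_map m l has_derivative L) (at x) \<and>
          fst (L (1, 0)) * snd (L (0, 1)) - fst (L (0, 1)) * snd (L (1, 0)) = 1"
      unfolding x(1) using jacobian[OF x(2)] .
  qed
  have O: "\<forall>(I :: real set) (r :: real \<Rightarrow> real) (v :: real \<Rightarrow> real).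
          open I \<and> is_interval I \<and>
          (\<forall>t\<in>I. (r has_real_derivative v t) (at t) \<and>
                  (v has_real_derivative (l / (r t)^3 - m / 2 * (1 / (r t)^2))) (at t) \<and>
                  (r t, v t) \<in> Dl m l)
          \<longrightarrow> (\<exists>\<theta> a. a > 0 \<and> (\<forall>t\<in>I. (r t, v t) = canon_map m l (\<theta> + t * a, a)))"
    using ode_solutions by blast
  have P: "\<forall>\<theta> a. a > 0 \<longrightarrow>
          (\<forall>t. ((\<lambda>s. fst (canon_map m l (\<theta> + s * a, a))) has_real_derivative
                   snd (canon_map m l (\<theta> + t * a, a))) (at t) \<and>
               ((\<lambda>s. snd (canon_map m l (\<theta> + s * a, a))) has_real_derivative
                   (l / (fst (canon_map m l (\<theta> + t * a, a)))^3
                    - m / 2 * (1 / (fst (canon_map m l (\<theta> + t * a, a)))^2))) (at t) \<and>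
               canon_map m l (\<theta> + t * a, a) \<in> Dl m l)"
  proof (intro allI impI conjI)
    fix \<theta> a t :: real assume a: "a > 0"
    show "((\<lambda>s. fst (canon_map m l (\<theta> + s * a, a))) has_real_derivative snd (canon_map m l (\<theta> + t * a, a))) (at t)"
      using ode_R[OF a, of \<theta> t] unfolding canon_map_def by simp
    show "((\<lambda>s. snd (canon_map m l (\<theta> + s * a, a))) has_real_derivative
                   (l / (fst (canon_map m l (\<theta> + t * a, a)))^3
                    - m / 2 * (1 / (fst (canon_map m l (\<theta> + t * a, a)))^2))) (at t)"
      using ode_V[OF a, of \<theta> t] unfolding canon_map_def by simp
    show "canon_map m l (\<theta> + t * a, a) \<in> Dl m l" using map_in_D[OF a] .
  qed
  show ?thesis using bij A B smooth_map smooth_inv J O P by blast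
qed


end
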